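(* For every PTM $M$, the probabilistic function $PTC_M:\mathbb{N}\times\mathbb{N}\to\mathcal D(\mathbb{N})$ defined by $PTC_M(x,y)(0)=PT^0_M(x,y)$, $PTC_M(x,y)(1)=PT^1_M(x,y)$ and $PTC_M(x,y)(z)=0$ for $z\ge2$ belongs to $\mathscr{PR}$.
   Context: PTM: Turing machine with two transition functions $\delta_0,\delta_1$ (each applied with probability $1/2$) defined on non-final configurations; initial configuration on input string $w=a\cdot v$ is $\langle\varepsilon,a,v,q_s\rangle$; final configurations are $\langle s,a,\varepsilon,q\rangle$ with $q$ final. $n\mapsto\overline n$ is the length-lexicographic bijection $\mathbb{N}\to\{0,1\}^*$ ($\overline0=\varepsilon,\overline1=0,\overline2=1,\overline3=00,\dots$). Computation tree $CT_M(x)$: nodes are binary strings, root $\varepsilon$ labelled by the initial configuration on $\overline x$, a node $b$ labelled by a non-final $C$ has children $b0,b1$ labelled $\delta_0(C),\delta_1(C)$, nodes labelled by final configurations have no children; $y\in\mathbb{N}$ denotes node $\overline y$, a leaf if it is in the tree with final label. $PT_M(x,y)=2^{-|\overline y|}$. Recursively in $y$: if $y$ is not a leaf of $CT_M(x)$, $PT^1_M(x,y)=1$, $PT^0_M(x,y)=0$; otherwise $PT^0_M(x,y)=PT_M(x,y)/\prod_{k<y}PT^1_M(x,k)$ and $PT^1_M(x,y)=1-PT^0_M(x,y)$. $\mathcal D(X)$: functions $X\to[0,1]$ with sum $\le1$; PF: function $\mathbb{N}^k\to\mathcal D(\mathbb{N})$. Basic PFs: $z(n)(0)=1$; $s(n)(n+1)=1$;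 $\Pi^n_m(k_1,\dots,k_n)(k_m)=1$; $r(x)(x)=r(x)(x+1)=1/2$ (other values $0$). Generalized composition $(f\odot(g_1,\dots,g_n))(\vec x)(y)=\sum_{z_1,\dots,z_n} f(z_1,\dots,z_n)(y)\prod_i g_i(\vec x)(z_i)$; primitive recursion $h(\vec x,0)=f(\vec x)$, $h(\vec x,y+1)(w)=\sum_z h(\vec x,y)(z)\, g(\vec x,y,z)(w)$; minimization $\mu f(\vec x)(y)=f(\vec x,y)(0)\prod_{z<y}\sum_{k>0}f(\vec x,z)(k)$. $\mathscr{PR}$ is the smallest class of PFs containing the basic PFs and closed under these operations. *)

theory Defs
  imports "HOL-Analysis.Analysis"
begin

datatype move = MoveL | MoveR

record ('q, 's) ptm =
  blank_sym :: 's
  zero_sym  :: 's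
  one_sym   :: 's
  init_state :: 'q
  final_states :: "'q set"
  delta0 :: "'q \<Rightarrow> 's \<Rightarrow> 'q \<times> 's \<times> move"
  delta1 :: "'q \<Rightarrow> 's \<Rightarrow> 'q \<times> 's \<times> move"

definition wf_ptm :: "('q, 's) ptm \<Rightarrow> bool" where
  "wf_ptm M \<longleftrightarrow> blank_sym M \<noteq> zero_sym M \<and> blank_sym M \<noteq> one_sym M \<and> zero_sym M \<noteq> one_sym M"

text \<open>Configuration \<langle>s, a, t, q\<rangle>: tape content to the left of the head (in natural order),
  the scanned symbol, tape content to the right of the head, and the state.\<close>
type_synonym ('q, 's) config = "'s list \<times> 's \<times> 's list \<times> 'q"

definition is_final :: "('q, 's) ptm \<Rightarrow> ('q, 's) config \<Rightarrow> bool" where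
  "is_final M C = (case C of (s, a, t, q) \<Rightarrow> t = [] \<and> q \<in> final_states M)"

definition apply_delta ::
  "('q, 's) ptm \<Rightarrow> ('q \<Rightarrow> 's \<Rightarrow> 'q \<times> 's \<times> move) \<Rightarrow> ('q, 's) config \<Rightarrow> ('q, 's) config" where
  "apply_delta M d C = (case C of (s, a, t, q) \<Rightarrow>
     (case d q a of (q', b, m) \<Rightarrow>
       (case m of
          MoveL \<Rightarrow> (if s = [] then ([], blank_sym M, b # t, q')
                   else (butlast s, last s, b # t, q'))
        | MoveR \<Rightarrow> (if t = [] then (s @ [b], blank_sym M, [], q')
                   else (s @ [b], hd t, tl t, q')))))"

definition step :: "('q, 's) ptm \<Rightarrow> bool \<Rightarrow> ('q, 's) config \<Rightarrow> ('q, 's) config" where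
  "step M i C = (if i then apply_delta M (delta1 M) C else apply_delta M (delta0 M) C)"

definition bit_sym :: "('q, 's) ptm \<Rightarrow> bool \<Rightarrow> 's" where
  "bit_sym M b = (if b then one_sym M else zero_sym M)"

definition initial_config :: "('q, 's) ptm \<Rightarrow> bool list \<Rightarrow> ('q, 's) config" where
  "initial_config M w = (case map (bit_sym M) w of
       [] \<Rightarrow> ([], blank_sym M, [], init_state M)
     | a # v \<Rightarrow> ([], a, v, init_state M))"

text \<open>Length-lexicographic bijection n \<mapsto> overline n from nat to binary strings.\<close>
fun nat_to_bin :: "nat \<Rightarrow> bool list" where
  "nat_to_bin 0 = []"
| "nat_to_bin (Suc n) = nat_to_bin (n div 2) @ [odd n]"

text \<open>Computation tree: label of node b, starting from configuration C; None if the node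
  is not in the tree (some proper ancestor is labelled by a final configuration).\<close>
fun tree_label :: "('q, 's) ptm \<Rightarrow> ('q, 's) config \<Rightarrow> bool list \<Rightarrow> ('q, 's) config option" where
  "tree_label M C [] = Some C"
| "tree_label M C (i # bs) = (if is_final M C then None else tree_label M (step M i C) bs)"

definition CT_label :: "('q, 's) ptm \<Rightarrow> nat \<Rightarrow> bool list \<Rightarrow> ('q, 's) config option" where
  "CT_label M x b = tree_label M (initial_config M (nat_to_bin x)) b"

definition is_leaf :: "('q, 's) ptm \<Rightarrow> nat \<Rightarrow> nat \<Rightarrow> bool" where
  "is_leaf M x y \<longleftrightarrow> (\<exists>C. CT_label M x (nat_to_bin y) = Some C \<and> is_final M C)"

definition PT :: "('q, 's) ptm \<Rightarrow> nat \<Rightarrow> nat \<Rightarrow> real" where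
  "PT M x y = (1/2) ^ length (nat_to_bin y)"

text \<open>PT_prod M x y = \<Prod>k<y. PT^1_M(x,k) (see lemma PT_prod_eq below).\<close>
fun PT_prod :: "('q, 's) ptm \<Rightarrow> nat \<Rightarrow> nat \<Rightarrow> real" where
  "PT_prod M x 0 = 1"
| "PT_prod M x (Suc y) = PT_prod M x y *
      (if is_leaf M x y then 1 - PT M x y / PT_prod M x y else 1)"

definition PT0 :: "('q, 's) ptm \<Rightarrow> nat \<Rightarrow> nat \<Rightarrow> real" where
  "PT0 M x y = (if is_leaf M x y then PT M x y / PT_prod M x y else 0)"

definition PT1 :: "('q, 's) ptm \<Rightarrow> nat \<Rightarrow> nat \<Rightarrow> real" where
  "PT1 M x y = (if is_leaf M x y then 1 - PT0 M x y else 1)"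

lemma PT_prod_eq: "PT_prod M x y = (\<Prod>k<y. PT1 M x k)"
  by (induction y) (simp_all add: PT1_def PT0_def)

definition PTC :: "('q, 's) ptm \<Rightarrow> nat \<Rightarrow> nat \<Rightarrow> nat \<Rightarrow> real" where
  "PTC M x y z = (if z = 0 then PT0 M x y else if z = 1 then PT1 M x y else 0)"

text \<open>A k-ary probabilistic function is represented as a map from argument lists
  (only lists of length k are relevant) to sub-distributions on nat.\<close>
type_synonym pf = "nat list \<Rightarrow> nat \<Rightarrow> real"

definition pf_zero :: pf where "pf_zero xs y = (if y = 0 then 1 else 0)"
definition pf_succ :: pf where "pf_succ xs y = (if y = hd xs + 1 then 1 else 0)"
definition pf_proj :: "nat \<Rightarrow> pf" where "pf_proj m xs y = (if y = xs ! (m - 1) then 1 else 0)"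
definition pf_rand :: pf where
  "pf_rand xs y = (if y = hd xs \<or> y = hd xs + 1 then 1/2 else 0)"

definition pf_comp :: "pf \<Rightarrow> pf list \<Rightarrow> pf" where
  "pf_comp f gs xs y =
     (\<Sum>\<^sub>\<infinity>zs\<in>{zs. length zs = length gs}. f zs y * (\<Prod>i<length gs. (gs ! i) xs (zs ! i)))"

fun pf_primrec_aux :: "pf \<Rightarrow> pf \<Rightarrow> nat list \<Rightarrow> nat \<Rightarrow> nat \<Rightarrow> real" where
  "pf_primrec_aux f g xs 0 = f xs"
| "pf_primrec_aux f g xs (Suc y) =
     (\<lambda>w. \<Sum>\<^sub>\<infinity>z\<in>UNIV. pf_primrec_aux f g xs y z * g (xs @ [y, z]) w)"

definition pf_primrec :: "pf \<Rightarrow> pf \<Rightarrow> pf" where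
  "pf_primrec f g ys = pf_primrec_aux f g (butlast ys) (last ys)"

definition pf_mu :: "pf \<Rightarrow> pf" where
  "pf_mu f xs y = f (xs @ [y]) 0 * (\<Prod>z<y. \<Sum>\<^sub>\<infinity>k\<in>{0<..}. f (xs @ [z]) k)"

inductive PR :: "nat \<Rightarrow> pf \<Rightarrow> bool" where
  PR_zero: "PR 1 pf_zero"
| PR_succ: "PR 1 pf_succ"
| PR_proj: "1 \<le> m \<Longrightarrow> m \<le> n \<Longrightarrow> PR n (pf_proj m)"
| PR_rand: "PR 1 pf_rand"
| PR_comp: "PR (length gs) f \<Longrightarrow> (\<forall>g\<in>set gs. PR k g) \<Longrightarrow> PR k (pf_comp f gs)"
| PR_primrec: "PR k f \<Longrightarrow> PR (k + 2) g \<Longrightarrow> PR (k + 1) (pf_primrec f g)"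
| PR_mu: "PR (k + 1) f \<Longrightarrow> PR k (pf_mu f)"

end

theory Submission
  imports Defs "HOL-Library.Countable"
begin

lemma infsum_single_pt:
  fixes f :: "'a \<Rightarrow> real"
  assumes "a \<in> A" "\<And>x. x \<in> A \<Longrightarrow> x \<noteq> a \<Longrightarrow> f x = 0"
  shows "infsum f A = f a"
proof -
  have "infsum f A = infsum f {a}"
    by (rule infsum_cong_neutral) (use assms in auto)
  thus ?thesis by simp
qed

definition PRa :: "nat \<Rightarrow> pf \<Rightarrow> bool" where
  "PRa k F \<longleftrightarrow> (\<exists>f. PR k f \<and> (\<forall>xs. length xs = k \<longrightarrow> f xs = F xs))"

definition dpf :: "(nat list \<Rightarrow> nat) \<Rightarrow> pf" where
  "dpf g xs y = (if y = g xs then 1 else 0)"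

definition DPR :: "nat \<Rightarrow> (nat list \<Rightarrow> nat) \<Rightarrow> bool" where
  "DPR k g \<longleftrightarrow> PRa k (dpf g)"

lemma PRa_cong: "PRa k F \<Longrightarrow> (\<And>xs. length xs = k \<Longrightarrow> F xs = G xs) \<Longrightarrow> PRa k G"
  unfolding PRa_def by metis

lemma DPR_cong: "DPR k f \<Longrightarrow> (\<And>xs. length xs = k \<Longrightarrow> f xs = g xs) \<Longrightarrow> DPR k g"
  unfolding DPR_def by (erule PRa_cong) (simp add: dpf_def fun_eq_iff)

lemma PRa_PR: "PR k f \<Longrightarrow> PRa k f"
  unfolding PRa_def by blast

lemma prod_indicator:
  "(\<Prod>i<(n::nat). (if P i then 1 else 0 :: real)) = (if \<forall>i<n. P i then 1 else 0)"
  by (induction n) (auto simp: less_Suc_eq)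

lemma PRa_comp:
  assumes F: "PRa (length gs) F" and G: "\<forall>g\<in>set gs. DPR k g"
  shows "PRa k (\<lambda>xs. F (map (\<lambda>g. g xs) gs))"
proof -
  obtain f where f: "PR (length gs) f" "\<And>xs. length xs = length gs \<Longrightarrow> f xs = F xs"
    using F unfolding PRa_def by blast
  define fs where "fs = map (\<lambda>g. SOME h. PR k h \<and> (\<forall>xs. length xs = k \<longrightarrow> h xs = dpf g xs)) gs"
  have fs: "PR k (fs!i) \<and> (\<forall>xs. length xs = k \<longrightarrow> (fs!i) xs = dpf (gs!i) xs)" if "i < length gs" for i
  proof -
    have "\<exists>h. PR k h \<and> (\<forall>xs. length xs = k \<longrightarrow> h xs = dpf (gs!i) xs)"
      using G that unfolding DPR_def PRa_def by auto
    from someI_ex[OF this] show ?thesis using that by (simp add: fs_def)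
  qed
  have lfs: "length fs = length gs" by (simp add: fs_def)
  have "PR k (pf_comp f fs)"
    using f(1) lfs fs by (intro PR_comp) (auto simp: in_set_conv_nth)
  moreover have "pf_comp f fs xs = F (map (\<lambda>g. g xs) gs)" if "length xs = k" for xs
  proof
    fix y
    let ?v = "map (\<lambda>g. g xs) gs"
    have "pf_comp f fs xs y = (\<Sum>\<^sub>\<infinity>zs\<in>{zs. length zs = length gs}.
            f zs y * (\<Prod>i<length gs. (if zs ! i = (gs ! i) xs then 1 else 0)))"
      unfolding pf_comp_def lfs
      by (intro infsum_cong arg_cong2[where f="(*)"] refl prod.cong) (auto simp: fs that dpf_def)
    also have "\<dots> = f ?v y * (\<Prod>i<length gs. (if ?v ! i = (gs ! i) xs then 1 else 0))"
    proof (rule infsum_single_pt)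
      fix zs assume "zs \<in> {zs. length zs = length gs}" "zs \<noteq> ?v"
      then obtain i where "i < length gs" "zs ! i \<noteq> ?v ! i"
        by (metis (mono_tags, lifting) length_map mem_Collect_eq nth_equalityI)
      thus "f zs y * (\<Prod>i<length gs. (if zs ! i = (gs ! i) xs then 1 else 0)) = 0"
        by (subst prod_indicator) auto
    qed simp
    also have "\<dots> = F ?v y" by (subst prod_indicator) (simp add: f(2))
    finally show "pf_comp f fs xs y = F ?v y" .
  qed
  ultimately show ?thesis unfolding PRa_def by blast
qed

lemma aux_cong:
  assumes "\<And>xs. length xs = k \<Longrightarrow> f xs = F xs" "\<And>xs. length xs = k + 2 \<Longrightarrow> g xs = G xs"
    "length xs = k"
  shows "pf_primrec_aux f g xs n = pf_primrec_aux F G xs n"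
  using assms by (induction n) auto

lemma PRa_primrec:
  assumes "PRa k F" "PRa (k+2) G"
  shows "PRa (k+1) (\<lambda>ys. pf_primrec_aux F G (butlast ys) (last ys))"
proof -
  obtain f g where "PR k f" "\<And>xs. length xs = k \<Longrightarrow> f xs = F xs"
    "PR (k+2) g" "\<And>xs. length xs = k+2 \<Longrightarrow> g xs = G xs"
    using assms unfolding PRa_def by metis
  thus ?thesis unfolding PRa_def
    using PR_primrec[of k f g] by (intro exI[of _ "pf_primrec f g"]) (auto intro!: aux_cong simp: pf_primrec_def)
qed

lemma PRa_mu:
  assumes "PRa (k+1) F"
  shows "PRa k (pf_mu F)"
proof -
  obtain f where "PR (k+1) f" "\<And>xs. length xs = k+1 \<Longrightarrow> f xs = F xs"
    using assms unfolding PRa_def by metis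
  thus ?thesis unfolding PRa_def
    by (intro exI[of _ "pf_mu f"]) (auto intro!: PR_mu simp: pf_mu_def)
qed


lemma DPR_zero1: "DPR 1 (\<lambda>_. 0)"
  unfolding DPR_def by (rule PRa_cong[OF PRa_PR[OF PR_zero]]) (simp add: dpf_def pf_zero_def fun_eq_iff)

lemma DPR_succ1: "DPR 1 (\<lambda>xs. Suc (xs!0))"
  unfolding DPR_def
  by (rule PRa_cong[OF PRa_PR[OF PR_succ]]) (auto simp: dpf_def pf_succ_def fun_eq_iff length_Suc_conv)

lemma DPR_proj: "i < k \<Longrightarrow> DPR k (\<lambda>xs. xs!i)"
  unfolding DPR_def
  by (rule PRa_cong[OF PRa_PR[OF PR_proj[of "Suc i" k]]]) (auto simp: dpf_def pf_proj_def fun_eq_iff)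

lemma DPR_comp:
  "DPR (length gs) f \<Longrightarrow> \<forall>g\<in>set gs. DPR k g \<Longrightarrow> DPR k (\<lambda>xs. f (map (\<lambda>g. g xs) gs))"
proof -
  assume a: "DPR (length gs) f" "\<forall>g\<in>set gs. DPR k g"
  have e: "(\<lambda>xs. dpf f (map (\<lambda>g. g xs) gs)) = dpf (\<lambda>xs. f (map (\<lambda>g. g xs) gs))"
    by (auto simp: dpf_def fun_eq_iff)
  show ?thesis using PRa_comp[of gs "dpf f" k] a unfolding DPR_def e by blast
qed

lemma DPR_op1: "DPR 1 (\<lambda>xs. h (xs!0)) \<Longrightarrow> DPR k g \<Longrightarrow> DPR k (\<lambda>xs. h (g xs))"
  using DPR_comp[of "[g]" "\<lambda>xs. h (xs!0)" k] by simp

lemma DPR_op2: "DPR 2 (\<lambda>xs. h (xs!0) (xs!1)) \<Longrightarrow> DPR k g1 \<Longrightarrow> DPR k g2 \<Longrightarrow> DPR k (\<lambda>xs. h (g1 xs) (g2 xs))"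
  using DPR_comp[of "[g1,g2]" "\<lambda>xs. h (xs!0) (xs!1)" k] by (simp add: numeral_2_eq_2)

lemma DPR_op3: "DPR 3 (\<lambda>xs. h (xs!0) (xs!1) (xs!2)) \<Longrightarrow> DPR k g1 \<Longrightarrow> DPR k g2 \<Longrightarrow> DPR k g3
   \<Longrightarrow> DPR k (\<lambda>xs. h (g1 xs) (g2 xs) (g3 xs))"
  using DPR_comp[of "[g1,g2,g3]" "\<lambda>xs. h (xs!0) (xs!1) (xs!2)" k] by (simp add: numeral_3_eq_3)

lemma DPR_const: "0 < k \<Longrightarrow> DPR k (\<lambda>_. c)"
proof (induction c)
  case 0 thus ?case using DPR_op1[where h="\<lambda>_. 0" and g="\<lambda>xs. xs!0" and k=k] DPR_zero1 DPR_proj by simp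
next
  case (Suc c) thus ?case using DPR_op1[where h=Suc and g="\<lambda>_. c" and k=k] DPR_succ1 by simp
qed

fun prec :: "(nat list \<Rightarrow> nat) \<Rightarrow> (nat list \<Rightarrow> nat) \<Rightarrow> nat list \<Rightarrow> nat \<Rightarrow> nat" where
  "prec a G xs 0 = a xs"
| "prec a G xs (Suc n) = G (xs @ [n, prec a G xs n])"

lemma aux_det: "pf_primrec_aux (dpf a) (dpf G) xs n = dpf (\<lambda>xs. prec a G xs n) xs"
proof (induction n)
  case 0 thus ?case by simp
next
  case (Suc n)
  show ?case
  proof
    fix w
    have "pf_primrec_aux (dpf a) (dpf G) xs (Suc n) w =
      (\<Sum>\<^sub>\<infinity>z\<in>UNIV. dpf (\<lambda>xs. prec a G xs n) xs z * dpf G (xs @ [n, z]) w)"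
      using Suc by simp
    also have "\<dots> = dpf (\<lambda>xs. prec a G xs n) xs (prec a G xs n) * dpf G (xs @ [n, prec a G xs n]) w"
      by (rule infsum_single_pt) (auto simp: dpf_def)
    also have "\<dots> = dpf (\<lambda>xs. prec a G xs (Suc n)) xs w" by (simp add: dpf_def)
    finally show "pf_primrec_aux (dpf a) (dpf G) xs (Suc n) w = dpf (\<lambda>xs. prec a G xs (Suc n)) xs w" .
  qed
qed

lemma DPR_prec:
  assumes "DPR k a" "DPR (k+2) G" "DPR k c"
  shows "DPR k (\<lambda>xs. prec a G xs (c xs))"
proof -
  have 1: "DPR (k+1) (\<lambda>ys. prec a G (butlast ys) (last ys))"
  proof -
    have e: "(\<lambda>ys. pf_primrec_aux (dpf a) (dpf G) (butlast ys) (last ys)) = dpf (\<lambda>ys. prec a G (butlast ys) (last ys))"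
      by (auto simp: aux_det dpf_def fun_eq_iff)
    show ?thesis using PRa_primrec[of k "dpf a" "dpf G"] assms unfolding DPR_def e by simp
  qed
  let ?gs = "map (\<lambda>i xs. xs!i) [0..<k] @ [c]"
  have "DPR k (\<lambda>xs. (\<lambda>ys. prec a G (butlast ys) (last ys)) (map (\<lambda>g. g xs) ?gs))"
    by (rule DPR_comp) (use 1 assms(3) in \<open>auto intro: DPR_proj\<close>)
  thus ?thesis
    by (rule DPR_cong) (simp add: o_def, metis map_nth)
qed

lemma DPR_mu:
  assumes "DPR (k+1) g" "\<And>xs. length xs = k \<Longrightarrow> \<exists>y. g (xs@[y]) = 0"
  shows "DPR k (\<lambda>xs. LEAST y. g (xs@[y]) = 0)"
proof -
  have "PRa k (pf_mu (dpf g))" using assms(1) PRa_mu unfolding DPR_def by blast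
  moreover have "pf_mu (dpf g) xs = dpf (\<lambda>xs. LEAST y. g (xs@[y]) = 0) xs" if "length xs = k" for xs
  proof
    fix y
    have s: "(\<Sum>\<^sub>\<infinity>j\<in>{0<..}. dpf g (xs @ [z]) j) = (if g (xs@[z]) = 0 then 0 else 1)" for z
    proof (cases "g (xs@[z]) = 0")
      case True thus ?thesis by (subst infsum_0) (auto simp: dpf_def)
    next
      case False
      hence "(\<Sum>\<^sub>\<infinity>j\<in>{0<..}. dpf g (xs @ [z]) j) = dpf g (xs @ [z]) (g (xs@[z]))"
        by (intro infsum_single_pt) (auto simp: dpf_def)
      thus ?thesis using False by (simp add: dpf_def)
    qed
    have p: "(\<Prod>z<y. (if g (xs@[z]) = 0 then 0 else 1::real)) = (if \<forall>z<y. g (xs@[z]) \<noteq> 0 then 1 else 0)"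
      by (induction y) (auto simp: less_Suc_eq)
    obtain y0 where y0: "g (xs@[y0]) = 0" using assms(2)[OF \<open>length xs = k\<close>] by blast
    have "(g (xs@[y]) = 0 \<and> (\<forall>z<y. g (xs@[z]) \<noteq> 0)) \<longleftrightarrow> y = (LEAST y. g (xs@[y]) = 0)"
    proof
      assume h: "g (xs@[y]) = 0 \<and> (\<forall>z<y. g (xs@[z]) \<noteq> 0)"
      show "y = (LEAST y. g (xs@[y]) = 0)"
        by (rule Least_equality[symmetric]) (use h in \<open>auto simp: not_less[symmetric]\<close>)
    next
      assume h: "y = (LEAST y. g (xs@[y]) = 0)"
      show "g (xs@[y]) = 0 \<and> (\<forall>z<y. g (xs@[z]) \<noteq> 0)"
        unfolding h using LeastI[of "\<lambda>y. g (xs@[y]) = 0", OF y0] not_less_Least by blast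
    qed
    thus "pf_mu (dpf g) xs y = dpf (\<lambda>xs. LEAST y. g (xs@[y]) = 0) xs y"
      unfolding pf_mu_def s p by (auto simp: dpf_def)
  qed
  ultimately show ?thesis unfolding DPR_def using PRa_cong by blast
qed


named_theorems dpr

lemma DPR_proj'[dpr]: "i < k \<Longrightarrow> DPR k (\<lambda>xs. xs!i)" by (rule DPR_proj)

lemma DPR_Suc[dpr]: "DPR k f \<Longrightarrow> DPR k (\<lambda>xs. Suc (f xs))"
  by (rule DPR_op1[OF DPR_succ1])

lemma DPR_const0: "DPR 0 (\<lambda>_. 0)"
  using DPR_mu[of 0 "\<lambda>_. 0"] DPR_zero1 by simp

lemma DPR_const'[dpr]: "DPR k (\<lambda>_. c)"
proof (cases k)
  case 0 thus ?thesis by (induction c) (auto simp: DPR_const0 intro: DPR_Suc[where f="\<lambda>_. _", simplified])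
next
  case (Suc n) thus ?thesis by (intro DPR_const) auto
qed

lemma add2: "DPR 2 (\<lambda>xs. xs!0 + xs!1)"
proof -
  have "DPR 2 (\<lambda>xs. prec (\<lambda>xs. xs!0) (\<lambda>ys. Suc (ys!3)) xs (xs!1))"
    by (intro DPR_prec DPR_proj DPR_Suc) auto
  moreover have "prec (\<lambda>xs. xs!0) (\<lambda>ys. Suc (ys!3)) xs n = xs!0 + n" if "length xs = 2" for xs n
    using that by (induction n) (auto simp: nth_append numeral_3_eq_3)
  ultimately show ?thesis by (rule DPR_cong) simp
qed

lemma DPR_add[dpr]: "DPR k f \<Longrightarrow> DPR k g \<Longrightarrow> DPR k (\<lambda>xs. f xs + g xs)"
  by (rule DPR_op2[OF add2])

lemma mult2: "DPR 2 (\<lambda>xs. xs!0 * xs!1)"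
proof -
  have "DPR 2 (\<lambda>xs. prec (\<lambda>_. 0) (\<lambda>ys. ys!3 + ys!0) xs (xs!1))"
    by (intro DPR_prec DPR_proj DPR_add DPR_const) auto
  moreover have "prec (\<lambda>_. 0) (\<lambda>ys. ys!3 + ys!0) xs n = xs!0 * n" if "length xs = 2" for xs n
    using that by (induction n) (auto simp: nth_append numeral_3_eq_3)
  ultimately show ?thesis by (rule DPR_cong) simp
qed

lemma DPR_mult[dpr]: "DPR k f \<Longrightarrow> DPR k g \<Longrightarrow> DPR k (\<lambda>xs. f xs * g xs)"
  by (rule DPR_op2[OF mult2])

lemma pred1: "DPR 1 (\<lambda>xs. xs!0 - 1)"
proof -
  have "DPR 1 (\<lambda>xs. prec (\<lambda>_. 0) (\<lambda>ys. ys!1) xs (xs!0))"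
    by (intro DPR_prec DPR_proj DPR_const) auto
  moreover have "prec (\<lambda>_. 0) (\<lambda>ys. ys!1) xs n = n - 1" if "length xs = 1" for xs n
    using that by (induction n) (auto simp: nth_append)
  ultimately show ?thesis by (rule DPR_cong) simp
qed

lemma sub2: "DPR 2 (\<lambda>xs. xs!0 - xs!1)"
proof -
  have "DPR 2 (\<lambda>xs. prec (\<lambda>xs. xs!0) (\<lambda>ys. ys!3 - 1) xs (xs!1))"
    by (intro DPR_prec DPR_proj DPR_op1[OF pred1]) auto
  moreover have "prec (\<lambda>xs. xs!0) (\<lambda>ys. ys!3 - 1) xs n = xs!0 - n" if "length xs = 2" for xs n
    using that by (induction n) (auto simp: nth_append numeral_3_eq_3)
  ultimately show ?thesis by (rule DPR_cong) simp
qed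

lemma DPR_sub[dpr]: "DPR k f \<Longrightarrow> DPR k g \<Longrightarrow> DPR k (\<lambda>xs. f xs - g xs)"
  by (rule DPR_op2[OF sub2])

definition DPRB :: "nat \<Rightarrow> (nat list \<Rightarrow> bool) \<Rightarrow> bool" where
  "DPRB k P \<longleftrightarrow> DPR k (\<lambda>xs. if P xs then 1 else 0)"

lemma DPR_if[dpr]: "DPRB k P \<Longrightarrow> DPR k u \<Longrightarrow> DPR k v \<Longrightarrow> DPR k (\<lambda>xs. if P xs then u xs else v xs)"
proof -
  assume a: "DPRB k P" "DPR k u" "DPR k v"
  have "DPR k (\<lambda>xs. (if P xs then 1 else 0) * u xs + (v xs - (if P xs then 1 else 0) * v xs))"
    using a unfolding DPRB_def by (intro DPR_add DPR_mult DPR_sub)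
  thus ?thesis by (rule DPR_cong) auto
qed

lemma DPRB_eq[dpr]: "DPR k f \<Longrightarrow> DPR k g \<Longrightarrow> DPRB k (\<lambda>xs. f xs = g xs)"
proof -
  assume a: "DPR k f" "DPR k g"
  have "DPR k (\<lambda>xs. Suc (f xs) - (f xs + ((f xs - g xs) + (g xs - f xs))))"
    using a by (intro dpr)
  thus ?thesis unfolding DPRB_def by (rule DPR_cong) auto
qed

lemma DPRB_less[dpr]: "DPR k f \<Longrightarrow> DPR k g \<Longrightarrow> DPRB k (\<lambda>xs. f xs < g xs)"
proof -
  assume a: "DPR k f" "DPR k g"
  have "DPR k (\<lambda>xs. (g xs - f xs) - (g xs - Suc (f xs)))"
    using a by (intro dpr)
  thus ?thesis unfolding DPRB_def by (rule DPR_cong) auto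
qed

lemma DPRB_le[dpr]: "DPR k f \<Longrightarrow> DPR k g \<Longrightarrow> DPRB k (\<lambda>xs. f xs \<le> g xs)"
proof -
  assume a: "DPR k f" "DPR k g"
  have "DPRB k (\<lambda>xs. f xs < Suc (g xs))" using a by (intro dpr)
  thus ?thesis unfolding DPRB_def by (rule DPR_cong) auto
qed

lemma DPRB_not[dpr]: "DPRB k P \<Longrightarrow> DPRB k (\<lambda>xs. \<not> P xs)"
proof -
  assume a: "DPRB k P"
  let ?b = "\<lambda>xs. if P xs then 1 else 0::nat"
  have "DPR k (\<lambda>xs. Suc (?b xs) - (?b xs + ?b xs))" using a unfolding DPRB_def by (intro a[unfolded DPRB_def] dpr)
  thus ?thesis unfolding DPRB_def by (rule DPR_cong) auto
qed

lemma DPRB_and[dpr]: "DPRB k P \<Longrightarrow> DPRB k Q \<Longrightarrow> DPRB k (\<lambda>xs. P xs \<and> Q xs)"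
proof -
  assume a: "DPRB k P" "DPRB k Q"
  have "DPR k (\<lambda>xs. (if P xs then 1 else 0) * (if Q xs then 1 else 0::nat))"
    using a unfolding DPRB_def by (intro a[unfolded DPRB_def] dpr)
  thus ?thesis unfolding DPRB_def by (rule DPR_cong) auto
qed

lemma DPRB_or[dpr]: "DPRB k P \<Longrightarrow> DPRB k Q \<Longrightarrow> DPRB k (\<lambda>xs. P xs \<or> Q xs)"
proof -
  assume a: "DPRB k P" "DPRB k Q"
  have "DPRB k (\<lambda>xs. \<not> (\<not> P xs \<and> \<not> Q xs))" using a by (intro dpr)
  thus ?thesis unfolding DPRB_def by (rule DPR_cong) auto
qed

lemma div1: assumes "0 < d" shows "DPR 1 (\<lambda>xs. xs!0 div d)"
proof -
  have 1: "DPR 1 (\<lambda>xs. LEAST q. (\<lambda>ys. Suc (ys!0) - d * Suc (ys!1)) (xs@[q]) = 0)"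
  proof (rule DPR_mu)
    show "DPR (1+1) (\<lambda>ys. Suc (ys!0) - d * Suc (ys!1))" by (intro dpr) auto
    fix xs :: "nat list" assume l: "length xs = 1"
    have "Suc (xs!0) \<le> d * Suc (xs!0)" using assms by (metis One_nat_def Suc_leI mult_le_mono1 nat_mult_1)
    thus "\<exists>y. Suc ((xs @ [y]) ! 0) - d * Suc ((xs @ [y]) ! 1) = 0"
      using l by (intro exI[of _ "xs!0"]) (simp add: nth_append)
  qed
  moreover have 2: "(LEAST q. Suc (xs!0) - d * Suc q = 0) = xs!0 div d" for xs
  proof (rule Least_equality)
    show "Suc (xs ! 0) - d * Suc (xs ! 0 div d) = 0"
      using assms by (simp add: dividend_less_times_div Suc_le_eq)
    fix y assume "Suc (xs ! 0) - d * Suc y = 0"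
    hence "xs!0 < d * Suc y" by simp
    thus "xs ! 0 div d \<le> y" using assms
      by (metis div_less_iff_less_mult less_Suc_eq_le mult.commute)
  qed
  from 1 show ?thesis
  proof (rule DPR_cong)
    fix xs :: "nat list" assume l: "length xs = 1"
    have "(xs@[q])!0 = xs!0" "(xs@[q])!1 = q" for q using l by (auto simp: nth_append)
    thus "(LEAST q. (\<lambda>ys. Suc (ys!0) - d * Suc (ys!1)) (xs@[q]) = 0) = xs!0 div d" using 2 by simp
  qed
qed

lemma DPR_div[dpr]: "0 < d \<Longrightarrow> DPR k f \<Longrightarrow> DPR k (\<lambda>xs. f xs div d)"
  by (rule DPR_op1[OF div1])

lemma DPR_mod[dpr]: "0 < d \<Longrightarrow> DPR k f \<Longrightarrow> DPR k (\<lambda>xs. f xs mod d)"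
proof -
  assume a: "0 < d" "DPR k f"
  have "DPR k (\<lambda>xs. f xs - (f xs div d) * d)" using a by (intro dpr) auto
  thus ?thesis by (rule DPR_cong) (simp add: minus_div_mult_eq_mod)
qed

lemma pow1: "DPR 1 (\<lambda>xs. 2 ^ (xs!0))"
proof -
  have "DPR 1 (\<lambda>xs. prec (\<lambda>_. 1) (\<lambda>ys. ys!2 * 2) xs (xs!0))"
    by (intro DPR_prec dpr) auto
  moreover have "prec (\<lambda>_. 1) (\<lambda>ys. ys!2 * 2) xs n = 2 ^ n" if "length xs = 1" for xs n
    using that by (induction n) (auto simp: nth_append)
  ultimately show ?thesis by (rule DPR_cong) simp
qed

lemma DPR_pow[dpr]: "DPR k f \<Longrightarrow> DPR k (\<lambda>xs. 2 ^ f xs)"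
  by (rule DPR_op1[OF pow1])

lemma DPR_iter:
  assumes "DPR 1 (\<lambda>xs. s (xs!0))" "DPR k a" "DPR k c"
  shows "DPR k (\<lambda>xs. (s ^^ c xs) (a xs))"
proof -
  have "DPR k (\<lambda>xs. prec a (\<lambda>ys. s (ys ! (k+1))) xs (c xs))"
    by (intro DPR_prec assms DPR_op1[OF assms(1)] DPR_proj) auto
  moreover have "prec a (\<lambda>ys. s (ys ! (k+1))) xs n = (s ^^ n) (a xs)" if "length xs = k" for xs n
    using that by (induction n) (auto simp: nth_append)
  ultimately show ?thesis by (rule DPR_cong) simp
qed

lemma DPR_tab1:
  assumes "finite {n. h n \<noteq> 0}"
  shows "DPR 1 (\<lambda>xs. h (xs!0))"
proof -
  have "\<forall>h. {n. h n \<noteq> 0} \<subseteq> S \<longrightarrow> DPR 1 (\<lambda>xs. h (xs!0))" if "finite S" for S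
    using that
  proof (induction S rule: finite_induct)
    case empty
    show ?case
    proof (intro allI impI)
      fix h :: "nat \<Rightarrow> nat" assume "{n. h n \<noteq> 0} \<subseteq> {}"
      hence "h = (\<lambda>_. 0)" by auto
      thus "DPR 1 (\<lambda>xs. h (xs!0))" by (simp add: DPR_const)
    qed
  next
    case (insert a S)
    show ?case
    proof (intro allI impI)
      fix h :: "nat \<Rightarrow> nat" assume h: "{n. h n \<noteq> 0} \<subseteq> insert a S"
      have sub: "{n. (h(a:=0)) n \<noteq> 0} \<subseteq> S" using h insert.hyps by auto
      have "DPR 1 (\<lambda>xs. (h(a:=0)) (xs!0))"
        using insert.IH sub by blast
      hence "DPR 1 (\<lambda>xs. if xs!0 = a then h a else (h(a:=0)) (xs!0))"
        by (intro dpr) auto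
      thus "DPR 1 (\<lambda>xs. h (xs!0))" by (rule DPR_cong) auto
    qed
  qed
  thus ?thesis using assms by blast
qed

lemma DPR_tab: "finite {n. h n \<noteq> 0} \<Longrightarrow> DPR k f \<Longrightarrow> DPR k (\<lambda>xs. h (f xs))"
  by (rule DPR_op1[OF DPR_tab1])


definition tri :: "nat \<Rightarrow> nat" where "tri w = w * Suc w div 2"
definition pr :: "nat \<Rightarrow> nat \<Rightarrow> nat" where "pr a b = tri (a + b) + b"
definition wd :: "nat \<Rightarrow> nat" where "wd n = (LEAST w. Suc n - tri (Suc w) = 0)"
definition sd :: "nat \<Rightarrow> nat" where "sd n = n - tri (wd n)"
definition fd :: "nat \<Rightarrow> nat" where "fd n = wd n - sd n"

lemma tri_Suc: "tri (Suc w) = tri w + Suc w"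
proof -
  have "Suc w * Suc (Suc w) = w * Suc w + 2 * Suc w" by simp
  thus ?thesis unfolding tri_def by simp
qed

lemma tri_mono: "w \<le> w' \<Longrightarrow> tri w \<le> tri w'"
  unfolding tri_def by (intro div_le_mono mult_le_mono) auto

lemma wd_pr: "wd (pr a b) = a + b"
  unfolding wd_def
proof (rule Least_equality)
  show "Suc (pr a b) - tri (Suc (a + b)) = 0" by (simp add: pr_def tri_Suc)
  fix w assume "Suc (pr a b) - tri (Suc w) = 0"
  hence "pr a b < tri (Suc w)" by simp
  show "a + b \<le> w"
  proof (rule ccontr)
    assume "\<not> a + b \<le> w"
    hence "tri (Suc w) \<le> tri (a+b)" by (intro tri_mono) auto
    thus False using \<open>pr a b < tri (Suc w)\<close> by (simp add: pr_def)
  qed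
qed

lemma sd_pr[simp]: "sd (pr a b) = b" unfolding sd_def wd_pr by (simp add: pr_def)
lemma fd_pr[simp]: "fd (pr a b) = a" by (simp add: fd_def wd_pr)

lemma DPR_tri[dpr]: "DPR k f \<Longrightarrow> DPR k (\<lambda>xs. tri (f xs))"
  unfolding tri_def by (intro dpr) auto

lemma DPR_pr[dpr]: "DPR k f \<Longrightarrow> DPR k g \<Longrightarrow> DPR k (\<lambda>xs. pr (f xs) (g xs))"
  unfolding pr_def by (intro dpr)

lemma wd1: "DPR 1 (\<lambda>xs. wd (xs!0))"
proof -
  have 1: "DPR 1 (\<lambda>xs. LEAST w. (\<lambda>ys. Suc (ys!0) - tri (Suc (ys!1))) (xs@[w]) = 0)"
  proof (rule DPR_mu)
    show "DPR (1+1) (\<lambda>ys. Suc (ys!0) - tri (Suc (ys!1)))" by (intro dpr) auto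
    fix xs :: "nat list" assume l: "length xs = 1"
    show "\<exists>y. Suc ((xs @ [y]) ! 0) - tri (Suc ((xs @ [y]) ! 1)) = 0"
      using l by (intro exI[of _ "xs!0"]) (simp add: nth_append tri_Suc)
  qed
  from 1 show ?thesis
  proof (rule DPR_cong)
    fix xs :: "nat list" assume l: "length xs = 1"
    have "(xs@[q])!0 = xs!0" "(xs@[q])!1 = q" for q using l by (auto simp: nth_append)
    thus "(LEAST w. (\<lambda>ys. Suc (ys!0) - tri (Suc (ys!1))) (xs@[w]) = 0) = wd (xs!0)"
      by (simp add: wd_def)
  qed
qed

lemma DPR_wd[dpr]: "DPR k f \<Longrightarrow> DPR k (\<lambda>xs. wd (f xs))"
  by (rule DPR_op1[OF wd1])
lemma DPR_sd[dpr]: "DPR k f \<Longrightarrow> DPR k (\<lambda>xs. sd (f xs))"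
  unfolding sd_def by (intro dpr)
lemma DPR_fd[dpr]: "DPR k f \<Longrightarrow> DPR k (\<lambda>xs. fd (f xs))"
  unfolding fd_def sd_def by (intro dpr)

lemma len_bounds: "2 ^ length (nat_to_bin y) \<le> Suc y \<and> Suc y < 2 ^ Suc (length (nat_to_bin y))"
proof (induction y rule: nat_to_bin.induct)
  case 1 thus ?case by simp
next
  case (2 n)
  let ?l = "length (nat_to_bin (n div 2))"
  have a: "2 ^ ?l \<le> Suc (n div 2)" and b: "Suc (n div 2) < 2 ^ Suc ?l" using 2 by auto
  have "2 ^ Suc ?l \<le> Suc (Suc n)" using a by simp
  moreover have "Suc (Suc n) < 2 ^ Suc (Suc ?l)" using b by simp
  ultimately show ?case by simp
qed

lemma len_le: "length (nat_to_bin y) \<le> y"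
proof -
  have "length (nat_to_bin y) < 2 ^ length (nat_to_bin y)" by simp
  thus ?thesis using len_bounds[of y] by linarith
qed

lemma len_mono: "y \<le> y' \<Longrightarrow> length (nat_to_bin y) \<le> length (nat_to_bin y')"
proof (rule ccontr)
  assume "y \<le> y'" "\<not> length (nat_to_bin y) \<le> length (nat_to_bin y')"
  hence "Suc (length (nat_to_bin y')) \<le> length (nat_to_bin y)" by simp
  hence "2 ^ Suc (length (nat_to_bin y')) \<le> (2::nat) ^ length (nat_to_bin y)"
    by (intro power_increasing) auto
  thus False using len_bounds[of y] len_bounds[of y'] \<open>y \<le> y'\<close> by linarith
qed

lemma len_least: "length (nat_to_bin y) = (LEAST L. Suc (Suc y) - 2 ^ Suc L = 0)"
proof (rule Least_equality[symmetric])
  show "Suc (Suc y) - 2 ^ Suc (length (nat_to_bin y)) = 0" using len_bounds[of y] by simp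
  fix L assume "Suc (Suc y) - 2 ^ Suc L = 0"
  hence "Suc y < 2 ^ Suc L" by simp
  show "length (nat_to_bin y) \<le> L"
  proof (rule ccontr)
    assume "\<not> ?thesis"
    hence "(2::nat) ^ Suc L \<le> 2 ^ length (nat_to_bin y)" by (intro power_increasing) auto
    thus False using len_bounds[of y] \<open>Suc y < 2 ^ Suc L\<close> by linarith
  qed
qed

lemma len1: "DPR 1 (\<lambda>xs. length (nat_to_bin (xs!0)))"
proof -
  have 1: "DPR 1 (\<lambda>xs. LEAST w. (\<lambda>ys. Suc (Suc (ys!0)) - 2 ^ (Suc (ys!1))) (xs@[w]) = 0)"
  proof (rule DPR_mu)
    show "DPR (1+1) (\<lambda>ys. Suc (Suc (ys!0)) - 2 ^ (Suc (ys!1)))" by (intro dpr) auto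
    fix xs :: "nat list" assume l: "length xs = 1"
    show "\<exists>y. Suc (Suc ((xs @ [y]) ! 0)) - 2 ^ Suc ((xs @ [y]) ! 1) = 0"
      using l len_bounds[of "xs!0"] by (intro exI[of _ "length (nat_to_bin (xs!0))"]) (simp add: nth_append)
  qed
  from 1 show ?thesis
  proof (rule DPR_cong)
    fix xs :: "nat list" assume l: "length xs = 1"
    have "(xs@[q])!0 = xs!0" "(xs@[q])!1 = q" for q using l by (auto simp: nth_append)
    thus "(LEAST w. (\<lambda>ys. Suc (Suc (ys!0)) - 2 ^ (Suc (ys!1))) (xs@[w]) = 0) = length (nat_to_bin (xs!0))"
      by (simp add: len_least)
  qed
qed

lemma DPR_len[dpr]: "DPR k f \<Longrightarrow> DPR k (\<lambda>xs. length (nat_to_bin (f xs)))"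
  by (rule DPR_op1[OF len1])

fun clg :: "nat \<Rightarrow> nat list \<Rightarrow> nat" where
  "clg b [] = 0"
| "clg b (d # l) = clg b l * b + d"

lemma nat_to_bin_pos: "2 \<le> m \<Longrightarrow> nat_to_bin (m - 1) = nat_to_bin (m div 2 - 1) @ [odd m]"
proof -
  assume "2 \<le> m"
  then obtain n where n: "m = Suc (Suc n)" by (metis add_2_eq_Suc le_Suc_ex)
  have "nat_to_bin (m - 1) = nat_to_bin (Suc n)" by (simp add: n)
  also have "\<dots> = nat_to_bin (n div 2) @ [odd n]" by simp
  also have "n div 2 = m div 2 - 1" by (simp add: n)
  also have "odd n = odd m" by (simp add: n)
  finally show ?thesis .
qed

definition hA :: "nat \<times> bool list \<Rightarrow> nat \<times> bool list" where
  "hA p = (if fst p \<le> 1 then p else (fst p div 2, odd (fst p) # snd p))"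

lemma hA_iter: "1 \<le> m \<Longrightarrow> length (nat_to_bin (m - 1)) \<le> n \<Longrightarrow>
   (hA ^^ n) (m, rest) = (1, nat_to_bin (m - 1) @ rest)"
proof (induction m arbitrary: n rest rule: less_induct)
  case (less m)
  show ?case
  proof (cases "m \<le> 1")
    case True
    hence "m = 1" using less.prems by simp
    have "(hA ^^ n) (1, rest) = (1, rest)" for n by (induction n) (auto simp: hA_def)
    thus ?thesis using \<open>m = 1\<close> by simp
  next
    case False
    hence e: "nat_to_bin (m - 1) = nat_to_bin (m div 2 - 1) @ [odd m]" by (intro nat_to_bin_pos) auto
    with less.prems obtain n' where n': "n = Suc n'" "length (nat_to_bin (m div 2 - 1)) \<le> n'"
      by (cases n) auto
    have "(hA ^^ n) (m, rest) = (hA ^^ n') (m div 2, odd m # rest)"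
      using False by (simp add: n'(1) funpow_Suc_right hA_def del: funpow.simps)
    also have "\<dots> = (1, nat_to_bin (m div 2 - 1) @ odd m # rest)"
      using False n'(2) by (intro less.IH) auto
    finally show ?thesis unfolding e by simp
  qed
qed

definition hstep :: "nat \<Rightarrow> nat \<Rightarrow> nat \<Rightarrow> nat \<Rightarrow> nat" where
  "hstep b d0 d1 w = (if fd w \<le> 1 then w else pr (fd w div 2) (sd w * b + (if fd w mod 2 = 1 then d1 else d0)))"

definition bincode :: "nat \<Rightarrow> nat \<Rightarrow> nat \<Rightarrow> nat \<Rightarrow> nat" where
  "bincode b d0 d1 x = sd ((hstep b d0 d1 ^^ Suc x) (pr (Suc x) 0))"

lemma bincode_correct:
  "bincode b d0 d1 x = clg b (map (\<lambda>c. if c then d1 else d0) (nat_to_bin x))"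
proof -
  define e where "e p = pr (fst p) (clg b (map (\<lambda>c. if c then d1 else d0) (snd p)))" for p
  have c: "hstep b d0 d1 (e p) = e (hA p)" for p
    by (auto simp: e_def hstep_def hA_def odd_iff_mod_2_eq_one)
  have ci: "(hstep b d0 d1 ^^ n) (e p) = e ((hA ^^ n) p)" for n p
    by (induction n) (auto simp: c)
  have "pr (Suc x) 0 = e (Suc x, [])" by (simp add: e_def)
  hence "bincode b d0 d1 x = sd (e ((hA ^^ Suc x) (Suc x, [])))"
    by (simp add: bincode_def ci del: funpow.simps)
  also have "(hA ^^ Suc x) (Suc x, []) = (1, nat_to_bin x)"
    using hA_iter[of "Suc x" "Suc x" "[]"] len_le[of x] by simp
  finally show ?thesis by (simp add: e_def)
qed

lemma DPR_bincode[dpr]: "DPR k f \<Longrightarrow> DPR k (\<lambda>xs. bincode b d0 d1 (f xs))"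
proof -
  assume a: "DPR k f"
  have "DPR 1 (\<lambda>xs. hstep b d0 d1 (xs!0))" unfolding hstep_def by (intro dpr) auto
  hence "DPR k (\<lambda>xs. sd ((hstep b d0 d1 ^^ Suc (f xs)) (pr (Suc (f xs)) 0)))"
    by (intro dpr DPR_iter a)
  thus ?thesis by (simp add: bincode_def)
qed


definition BB :: "('q::finite, 's::finite) ptm \<Rightarrow> nat" where
  "BB M = Suc (Suc (Max (range (to_nat :: 's \<Rightarrow> nat))))"

lemma to_nat_lt: "Suc (to_nat (a::'s)) < BB (M :: ('q::finite, 's::finite) ptm)"
proof -
  have "to_nat a \<le> Max (range (to_nat :: 's \<Rightarrow> nat))" by (intro Max_ge) auto
  thus ?thesis unfolding BB_def by linarith
qed

definition sc :: "('q::finite, 's::finite) ptm \<Rightarrow> 's list \<Rightarrow> nat" where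
  "sc M t = clg (BB M) (map (\<lambda>a. Suc (to_nat a)) t)"

lemma sc_Nil[simp]: "sc M [] = 0" by (simp add: sc_def)
lemma sc_Cons: "sc M (b # t) = sc M t * BB M + Suc (to_nat b)" by (simp add: sc_def)
lemma sc_zero[simp]: "sc M t = 0 \<longleftrightarrow> t = []" by (cases t) (auto simp: sc_def)
lemma sc_Cons': "sc M (b # t) = Suc (to_nat b) + sc M t * BB M" by (simp add: sc_def)
lemma sc_div: "sc M (b # t) div BB M = sc M t"
  using to_nat_lt[of b M] unfolding sc_Cons' by (subst div_mult_self1) auto
lemma sc_mod: "sc M (b # t) mod BB M - 1 = to_nat b"
  using to_nat_lt[of b M] unfolding sc_Cons' by (subst mod_mult_self1) auto

definition cc :: "('q::finite, 's::finite) ptm \<Rightarrow> ('q, 's) config \<Rightarrow> nat" where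
  "cc M C = (case C of (s, a, t, q) \<Rightarrow> pr (sc M (rev s)) (pr (sc M t) (pr (to_nat a) (to_nat q))))"

definition kf :: "bool \<times> 'q::finite \<times> 's::finite \<Rightarrow> nat" where
  "kf p = (case p of (i, q, a) \<Rightarrow> pr (if i then 1 else 0) (pr (to_nat q) (to_nat a)))"

lemma inj_kf: "inj kf"
proof (rule injI)
  fix p p' :: "bool \<times> 'q::finite \<times> 's::finite" assume "kf p = kf p'"
  moreover obtain i q a i' q' a' where p: "p = (i, q, a)" "p' = (i', q', a')" by (cases p; cases p') auto
  ultimately have "fd (kf p) = fd (kf p')" "fd (sd (kf p)) = fd (sd (kf p'))" "sd (sd (kf p)) = sd (sd (kf p'))"
    by auto
  thus "p = p'" unfolding p kf_def by (auto split: if_splits)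
qed

definition dl :: "('q::finite, 's::finite) ptm \<Rightarrow> bool \<times> 'q \<times> 's \<Rightarrow> 'q \<times> 's \<times> move" where
  "dl M p = (case p of (i, q, a) \<Rightarrow> (if i then delta1 M else delta0 M) q a)"

definition Tq :: "('q::finite, 's::finite) ptm \<Rightarrow> nat \<Rightarrow> nat" where
  "Tq M n = (if n \<in> range (kf :: bool \<times> 'q \<times> 's \<Rightarrow> nat) then to_nat (fst (dl M (inv kf n))) else 0)"
definition Tb :: "('q::finite, 's::finite) ptm \<Rightarrow> nat \<Rightarrow> nat" where
  "Tb M n = (if n \<in> range (kf :: bool \<times> 'q \<times> 's \<Rightarrow> nat) then to_nat (fst (snd (dl M (inv kf n)))) else 0)"
definition Tm :: "('q::finite, 's::finite) ptm \<Rightarrow> nat \<Rightarrow> nat" where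
  "Tm M n = (if n \<in> range (kf :: bool \<times> 'q \<times> 's \<Rightarrow> nat) then (case snd (snd (dl M (inv kf n))) of MoveL \<Rightarrow> 0 | MoveR \<Rightarrow> 1) else 0)"
definition Fq :: "('q::finite, 's::finite) ptm \<Rightarrow> nat \<Rightarrow> nat" where
  "Fq M n = (if n \<in> to_nat ` final_states M then 1 else 0)"

lemma fin_kf: "finite (range (kf :: bool \<times> 'q::finite \<times> 's::finite \<Rightarrow> nat))" by simp

lemma DPR_Tq[dpr]: "DPR k f \<Longrightarrow> DPR k (\<lambda>xs. Tq M (f xs))"
  by (rule DPR_tab, rule finite_subset[OF _ fin_kf]) (auto simp: Tq_def split: if_splits)
lemma DPR_Tb[dpr]: "DPR k f \<Longrightarrow> DPR k (\<lambda>xs. Tb M (f xs))"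
  by (rule DPR_tab, rule finite_subset[OF _ fin_kf]) (auto simp: Tb_def split: if_splits)
lemma DPR_Tm[dpr]: "DPR k f \<Longrightarrow> DPR k (\<lambda>xs. Tm M (f xs))"
  by (rule DPR_tab, rule finite_subset[OF _ fin_kf]) (auto simp: Tm_def split: if_splits)
lemma DPR_Fq[dpr]: "DPR k f \<Longrightarrow> DPR k (\<lambda>xs. Fq M (f xs))"
  by (rule DPR_tab, rule finite_subset[of _ "to_nat ` final_states M"]) (auto simp: Fq_def split: if_splits)

definition stepC :: "('q::finite, 's::finite) ptm \<Rightarrow> nat \<Rightarrow> nat \<Rightarrow> nat" where
  "stepC M i c = (
     if Tm M (pr i (pr (sd (sd (sd c))) (fd (sd (sd c))))) = 0 then
       (if fd c = 0 then pr 0 (pr (fd (sd c) * BB M + Suc (Tb M (pr i (pr (sd (sd (sd c))) (fd (sd (sd c)))))))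
                              (pr (to_nat (blank_sym M)) (Tq M (pr i (pr (sd (sd (sd c))) (fd (sd (sd c))))))))
        else pr (fd c div BB M) (pr (fd (sd c) * BB M + Suc (Tb M (pr i (pr (sd (sd (sd c))) (fd (sd (sd c)))))))
                              (pr (fd c mod BB M - 1) (Tq M (pr i (pr (sd (sd (sd c))) (fd (sd (sd c)))))))))
     else
       (if fd (sd c) = 0 then pr (fd c * BB M + Suc (Tb M (pr i (pr (sd (sd (sd c))) (fd (sd (sd c)))))))
                              (pr 0 (pr (to_nat (blank_sym M)) (Tq M (pr i (pr (sd (sd (sd c))) (fd (sd (sd c))))))))
        else pr (fd c * BB M + Suc (Tb M (pr i (pr (sd (sd (sd c))) (fd (sd (sd c)))))))
                (pr (fd (sd c) div BB M) (pr (fd (sd c) mod BB M - 1) (Tq M (pr i (pr (sd (sd (sd c))) (fd (sd (sd c))))))))))"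

lemma DPR_stepC[dpr]: "DPR k f \<Longrightarrow> DPR k g \<Longrightarrow> DPR k (\<lambda>xs. stepC M (f xs) (g xs))"
proof -
  assume a: "DPR k f" "DPR k g"
  have "0 < BB M" by (simp add: BB_def)
  with a show ?thesis unfolding stepC_def by (intro dpr a)
qed

lemma stepC_cc: "stepC M (if i then 1 else 0) (cc M C) = cc M (step M i C)"
proof -
  obtain s a t q where C: "C = (s, a, t, q)" by (cases C) auto
  obtain q' b m where d: "dl M (i, q, a) = (q', b, m)" by (cases "dl M (i, q, a)") auto
  have key: "pr (if i then 1 else 0) (pr (to_nat q) (to_nat a)) = kf (i, q, a)" by (simp add: kf_def)
  have inv: "inv kf (kf (i, q, a)) = (i, q, a)" by (rule inv_f_f[OF inj_kf])
  have T: "Tq M (kf (i,q,a)) = to_nat q'" "Tb M (kf (i,q,a)) = to_nat b"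
     "Tm M (kf (i,q,a)) = (case m of MoveL \<Rightarrow> 0 | MoveR \<Rightarrow> 1)"
    by (simp_all add: Tq_def Tb_def Tm_def inv d)
  have st: "step M i C = (case m of
          MoveL \<Rightarrow> (if s = [] then ([], blank_sym M, b # t, q')
                   else (butlast s, last s, b # t, q'))
        | MoveR \<Rightarrow> (if t = [] then (s @ [b], blank_sym M, [], q')
                   else (s @ [b], hd t, tl t, q')))"
    using d by (cases i; cases m) (auto simp: step_def apply_delta_def C dl_def)
  show ?thesis
  proof (cases m)
    case MoveL
    show ?thesis
    proof (cases "s = []")
      case True thus ?thesis using MoveL unfolding st by (simp add: stepC_def cc_def C key T sc_Cons)
    next
      case False
      hence r: "rev s = last s # rev (butlast s)"
        by (metis append_butlast_last_id rev_eq_Cons_iff rev_rev_ident)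
      have dm: "sc M (rev s) div BB M = sc M (rev (butlast s))" "sc M (rev s) mod BB M - Suc 0 = to_nat (last s)"
        using r sc_div sc_mod One_nat_def by metis+
      show ?thesis using MoveL False
        unfolding st by (simp add: stepC_def cc_def C key T sc_Cons dm)
    qed
  next
    case MoveR
    show ?thesis
    proof (cases "t = []")
      case True thus ?thesis using MoveR unfolding st by (simp add: stepC_def cc_def C key T sc_Cons)
    next
      case False
      hence r: "t = hd t # tl t" by simp
      have dm: "sc M t div BB M = sc M (tl t)" "sc M t mod BB M - Suc 0 = to_nat (hd t)"
        using r sc_div sc_mod One_nat_def by metis+
      show ?thesis using MoveR False
        unfolding st by (simp add: stepC_def cc_def C key T sc_Cons dm)
    qed
  qed
qed


definition finC :: "('q::finite, 's::finite) ptm \<Rightarrow> nat \<Rightarrow> bool" where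
  "finC M c = (fd (sd c) = 0 \<and> Fq M (sd (sd (sd c))) = 1)"

lemma finC_cc: "finC M (cc M C) \<longleftrightarrow> is_final M C"
  by (cases C) (auto simp: finC_def cc_def Fq_def is_final_def)

lemma DPRB_finC[dpr]: "DPR k f \<Longrightarrow> DPRB k (\<lambda>xs. finC M (f xs))"
  unfolding finC_def by (intro dpr)

definition pc :: "bool list \<Rightarrow> nat" where
  "pc bs = clg 3 (map (\<lambda>b. if b then 2 else Suc 0) bs)"

definition walkC :: "('q::finite, 's::finite) ptm \<Rightarrow> nat \<Rightarrow> nat" where
  "walkC M w = (if sd (sd w) \<noteq> 0 \<or> fd (sd w) = 0 then w
     else if finC M (fd w) then pr 0 (pr 0 1)
     else pr (stepC M (if fd (sd w) mod 3 = 2 then 1 else 0) (fd w)) (pr (fd (sd w) div 3) 0))"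

lemma DPR_walkC[dpr]: "DPR k f \<Longrightarrow> DPR k (\<lambda>xs. walkC M (f xs))"
  unfolding walkC_def by (intro dpr) auto

fun walkA :: "('q, 's) ptm \<Rightarrow> ('q, 's) config option \<times> bool list \<Rightarrow> ('q, 's) config option \<times> bool list" where
  "walkA M (Some C, i # bs) = (if is_final M C then (None, []) else (Some (step M i C), bs))"
| "walkA M p = p"

fun encW :: "('q::finite, 's::finite) ptm \<Rightarrow> ('q, 's) config option \<times> bool list \<Rightarrow> nat" where
  "encW M (Some C, bs) = pr (cc M C) (pr (pc bs) 0)"
| "encW M (None, bs) = pr 0 (pr 0 1)"

lemma walkC_enc: "walkC M (encW M p) = encW M (walkA M p)"
proof -
  obtain c bs where p: "p = (c, bs)" by (cases p)
  show ?thesis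
  proof (cases c)
    case None thus ?thesis by (simp add: p walkC_def)
  next
    case (Some C)
    show ?thesis
    proof (cases bs)
      case Nil thus ?thesis by (simp add: p Some walkC_def pc_def)
    next
      case (Cons i bs')
      have P: "pc bs = pc bs' * 3 + (if i then 2 else 1)" by (simp add: pc_def Cons)
      have m: "pc bs mod 3 = 2 \<longleftrightarrow> i" "pc bs div 3 = pc bs'" "pc bs \<noteq> 0" unfolding P by auto
      show ?thesis using m
        by (auto simp: p Some Cons walkC_def finC_cc stepC_cc[symmetric] simp del: encW.simps(1))
          (auto simp: finC_cc stepC_cc[symmetric] Cons)
    qed
  qed
qed

lemma walkA_fix: "(walkA M ^^ n) (c, []) = (c, [])"
proof (induction n)
  case (Suc n) thus ?case by (cases c) auto
qed simp

lemma walkA_None: "(walkA M ^^ n) (None, bs) = (None, bs)"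
  by (induction n) auto

lemma walkA_iter: "length bs \<le> n \<Longrightarrow> (walkA M ^^ n) (Some C, bs) = (tree_label M C bs, [])"
proof (induction bs arbitrary: C n)
  case Nil thus ?case using walkA_fix by simp
next
  case (Cons i bs)
  then obtain n' where n': "n = Suc n'" "length bs \<le> n'" by (cases n) auto
  show ?case
  proof (cases "is_final M C")
    case True
    thus ?thesis by (simp add: n'(1) funpow_Suc_right walkA_fix del: funpow.simps)
  next
    case False
    thus ?thesis using Cons.IH[OF n'(2)] by (simp add: n'(1) funpow_Suc_right del: funpow.simps)
  qed
qed

definition initC :: "('q::finite, 's::finite) ptm \<Rightarrow> nat \<Rightarrow> nat" where
  "initC M x = (if bincode (BB M) (Suc (to_nat (zero_sym M))) (Suc (to_nat (one_sym M))) x = 0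
     then pr 0 (pr 0 (pr (to_nat (blank_sym M)) (to_nat (init_state M))))
     else pr 0 (pr (bincode (BB M) (Suc (to_nat (zero_sym M))) (Suc (to_nat (one_sym M))) x div BB M)
                 (pr (bincode (BB M) (Suc (to_nat (zero_sym M))) (Suc (to_nat (one_sym M))) x mod BB M - 1)
                     (to_nat (init_state M)))))"

lemma DPR_initC[dpr]: "DPR k f \<Longrightarrow> DPR k (\<lambda>xs. initC M (f xs))"
proof -
  assume "DPR k f"
  moreover have "0 < BB M" by (simp add: BB_def)
  ultimately show ?thesis unfolding initC_def by (intro dpr) auto
qed

lemma initC_cc: "initC M x = cc M (initial_config M (nat_to_bin x))"
proof -
  have bc: "bincode (BB M) (Suc (to_nat (zero_sym M))) (Suc (to_nat (one_sym M))) x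
           = sc M (map (bit_sym M) (nat_to_bin x))"
    by (simp add: bincode_correct sc_def bit_sym_def comp_def if_distrib)
  show ?thesis
  proof (cases "map (bit_sym M) (nat_to_bin x)")
    case Nil thus ?thesis by (simp add: initC_def bc initial_config_def cc_def)
  next
    case (Cons a v)
    have "sc M (a # v) div BB M = sc M v" "sc M (a # v) mod BB M - 1 = to_nat a"
      by (rule sc_div, rule sc_mod)
    thus ?thesis using Cons by (simp add: initC_def bc initial_config_def cc_def)
  qed
qed

definition leafC :: "('q::finite, 's::finite) ptm \<Rightarrow> nat \<Rightarrow> nat \<Rightarrow> bool" where
  "leafC M x y = (sd (sd ((walkC M ^^ Suc y) (pr (initC M x) (pr (bincode 3 1 2 y) 0)))) = 0 \<and>
     finC M (fd ((walkC M ^^ Suc y) (pr (initC M x) (pr (bincode 3 1 2 y) 0)))))"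

lemma DPRB_leafC[dpr]: "DPR k f \<Longrightarrow> DPR k g \<Longrightarrow> DPRB k (\<lambda>xs. leafC M (f xs) (g xs))"
proof -
  assume a: "DPR k f" "DPR k g"
  have w: "DPR 1 (\<lambda>xs. walkC M (xs!0))" by (intro dpr) auto
  show ?thesis unfolding leafC_def by (intro dpr DPR_iter[OF w] a)
qed

lemma leafC_correct: "leafC M x y \<longleftrightarrow> is_leaf M x y"
proof -
  have ci: "(walkC M ^^ n) (encW M p) = encW M ((walkA M ^^ n) p)" for n p
    by (induction n) (auto simp: walkC_enc)
  have e: "pr (initC M x) (pr (bincode 3 1 2 y) 0) =
        encW M (Some (initial_config M (nat_to_bin x)), nat_to_bin y)"
    by (simp add: initC_cc pc_def bincode_correct One_nat_def)
  have "(walkC M ^^ Suc y) (pr (initC M x) (pr (bincode 3 1 2 y) 0)) =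
         (walkC M ^^ Suc y) (encW M (Some (initial_config M (nat_to_bin x)), nat_to_bin y))"
    by (simp only: e)
  also have "\<dots> = encW M ((walkA M ^^ Suc y) (Some (initial_config M (nat_to_bin x)), nat_to_bin y))"
    by (rule ci)
  also have "\<dots> = encW M (CT_label M x (nat_to_bin y), [])"
    using len_le[of y] by (subst walkA_iter) (auto simp: CT_label_def)
  finally have "(walkC M ^^ Suc y) (pr (initC M x) (pr (bincode 3 1 2 y) 0)) =
         encW M (CT_label M x (nat_to_bin y), [])" .
  thus ?thesis unfolding leafC_def is_leaf_def
    by (cases "CT_label M x (nat_to_bin y)") (auto simp: finC_cc)
qed


abbreviation L :: "nat \<Rightarrow> nat" where "L y \<equiv> length (nat_to_bin y)"

definition SB :: "('q::finite, 's::finite) ptm \<Rightarrow> nat \<Rightarrow> nat \<Rightarrow> nat" where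
  "SB M x y = (\<Sum>k<y. if leafC M x k then 2 ^ (L y - L k) else 0)"

definition Bv :: "('q::finite, 's::finite) ptm \<Rightarrow> nat \<Rightarrow> nat \<Rightarrow> nat" where
  "Bv M x y = 2 ^ L y - SB M x y"

lemma div2: "DPR 2 (\<lambda>xs. xs!0 div xs!1)"
proof -
  let ?g = "\<lambda>ys. if ys!1 = 0 then 0 else Suc (ys!0) - ys!1 * Suc (ys!2)"
  have 1: "DPR 2 (\<lambda>xs. LEAST q. ?g (xs@[q]) = 0)"
  proof (rule DPR_mu)
    show "DPR (2+1) ?g" by (intro dpr) auto
    fix xs :: "nat list" assume l: "length xs = 2"
    have "Suc (xs!0) \<le> xs!1 * Suc (xs!0)" if "xs!1 \<noteq> 0" using that
      by (metis One_nat_def Suc_leI mult_le_mono1 nat_mult_1 not_gr0)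
    thus "\<exists>y. ?g (xs@[y]) = 0"
      using l by (intro exI[of _ "xs!0"]) (simp add: nth_append)
  qed
  from 1 show ?thesis
  proof (rule DPR_cong)
    fix xs :: "nat list" assume l: "length xs = 2"
    have e: "(xs@[q])!0 = xs!0" "(xs@[q])!1 = xs!1" "(xs@[q])!2 = q" for q using l by (auto simp: nth_append)
    show "(LEAST q. ?g (xs@[q]) = 0) = xs!0 div xs!1"
    proof (cases "xs!1 = 0")
      case True thus ?thesis unfolding e by simp
    next
      case False
      show ?thesis unfolding e
      proof (rule Least_equality)
        show "(if xs!1 = 0 then 0 else Suc (xs!0) - xs!1 * Suc (xs!0 div xs!1)) = 0"
          using False by (simp add: dividend_less_times_div Suc_le_eq)
        fix y assume "(if xs!1 = 0 then 0 else Suc (xs!0) - xs!1 * Suc y) = 0"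
        hence "xs!0 < xs!1 * Suc y" using False by simp
        thus "xs ! 0 div xs!1 \<le> y" using False
          by (metis div_less_iff_less_mult less_Suc_eq_le mult.commute not_gr0)
      qed
    qed
  qed
qed

lemma DPR_Bv: "DPR 2 (\<lambda>xs. Bv M (xs!0) (xs!1))"
proof -
  let ?G = "\<lambda>ys. ys!3 + (if leafC M (ys!0) (ys!2) then 2 ^ (L (ys!1) - L (ys!2)) else 0)"
  have 1: "DPR 2 (\<lambda>xs. 2 ^ L (xs!1) - prec (\<lambda>_. 0) ?G xs (xs!1))"
    by (intro dpr DPR_prec) auto
  have 2: "prec (\<lambda>_. 0) ?G xs n = (\<Sum>k<n. if leafC M (xs!0) k then 2 ^ (L (xs!1) - L k) else 0)"
    if "length xs = 2" for xs n
    using that by (induction n) (auto simp: nth_append numeral_3_eq_3)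
  from 1 show ?thesis by (rule DPR_cong) (simp only: Bv_def SB_def 2)
qed

definition H :: "('q::finite, 's::finite) ptm \<Rightarrow> nat list \<Rightarrow> nat" where
  "H M xs = (if \<not> leafC M (xs!0) (xs!1) then 1 else if Bv M (xs!0) (xs!1) \<le> 1 then 0
     else if (2 ^ Suc (xs!3) div Bv M (xs!0) (xs!1)) mod 2 = 1 then 0 else 1)"

lemma DPR_H: "DPR 4 (H M)"
proof -
  have b: "DPR 4 (\<lambda>xs. Bv M (xs!0) (xs!1))"
    using DPR_op2[OF DPR_Bv, of 4 "\<lambda>xs. xs!0" "\<lambda>xs. xs!1"] DPR_proj by simp
  have d2: "DPR k (\<lambda>xs. f xs div g xs)" if "DPR k f" "DPR k g" for k f g
    using DPR_op2[OF div2 that] .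
  have "DPR 4 (\<lambda>xs. if \<not> leafC M (xs!0) (xs!1) then 1 else if Bv M (xs!0) (xs!1) \<le> 1 then 0
     else if (2 ^ Suc (xs!3) div Bv M (xs!0) (xs!1)) mod 2 = 1 then 0 else 1)"
    by (intro dpr b d2) auto
  thus ?thesis unfolding H_def[abs_def] .
qed


definition pfree :: "bool list set \<Rightarrow> bool" where
  "pfree A \<longleftrightarrow> (\<forall>u\<in>A. \<forall>v\<in>A. \<forall>w. v = u @ w \<longrightarrow> w = [])"

lemma kraft: "finite A \<Longrightarrow> pfree A \<Longrightarrow> (\<forall>w\<in>A. length w \<le> n) \<Longrightarrow> (\<Sum>w\<in>A. (1/2::real) ^ length w) \<le> 1"
proof (induction n arbitrary: A)
  case 0
  hence "A \<subseteq> {[]}" by auto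
  hence "A = {} \<or> A = {[]}" by auto
  thus ?case by auto
next
  case (Suc n)
  show ?case
  proof (cases "[] \<in> A")
    case True
    have "\<forall>v\<in>A. v = []"
    proof
      fix v assume "v \<in> A"
      have "v = [] @ v" by simp
      thus "v = []" using Suc.prems(2) True \<open>v \<in> A\<close> unfolding pfree_def by blast
    qed
    hence "A = {[]}" using True by blast
    thus ?thesis by simp
  next
    case False
    define A0 where "A0 = {w. False # w \<in> A}"
    define A1 where "A1 = {w. True # w \<in> A}"
    have AU: "A = Cons False ` A0 \<union> Cons True ` A1"
    proof
      show "A \<subseteq> Cons False ` A0 \<union> Cons True ` A1"
      proof
        fix v assume "v \<in> A"
        with False obtain b w where "v = b # w" by (cases v) auto
        thus "v \<in> Cons False ` A0 \<union> Cons True ` A1" using \<open>v \<in> A\<close> by (cases b) (auto simp: A0_def A1_def)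
      qed
    qed (auto simp: A0_def A1_def)
    have f0: "finite A0"
    proof -
      have "A0 = Cons False -` A" by (auto simp: A0_def)
      moreover have ij: "inj (Cons False)" by (simp add: inj_on_def)
      ultimately show ?thesis using finite_vimageI[OF Suc.prems(1) ij] by simp
    qed
    have f1: "finite A1"
    proof -
      have "A1 = Cons True -` A" by (auto simp: A1_def)
      moreover have ij: "inj (Cons True)" by (simp add: inj_on_def)
      ultimately show ?thesis using finite_vimageI[OF Suc.prems(1) ij] by simp
    qed
    have p0: "pfree A0" unfolding pfree_def
    proof (intro ballI allI impI)
      fix u v w assume "u \<in> A0" "v \<in> A0" "v = u @ w"
      hence "False # u \<in> A" "False # v \<in> A" "False # v = (False # u) @ w" by (auto simp: A0_def)
      thus "w = []" using Suc.prems(2) unfolding pfree_def by blast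
    qed
    have p1: "pfree A1" unfolding pfree_def
    proof (intro ballI allI impI)
      fix u v w assume "u \<in> A1" "v \<in> A1" "v = u @ w"
      hence "True # u \<in> A" "True # v \<in> A" "True # v = (True # u) @ w" by (auto simp: A1_def)
      thus "w = []" using Suc.prems(2) unfolding pfree_def by blast
    qed
    have l0: "\<forall>w\<in>A0. length w \<le> n" using Suc.prems(3) unfolding A0_def by fastforce
    have l1: "\<forall>w\<in>A1. length w \<le> n" using Suc.prems(3) unfolding A1_def by fastforce
    have "(\<Sum>w\<in>A. (1/2::real) ^ length w) =
          (\<Sum>w\<in>Cons False ` A0. (1/2::real) ^ length w) + (\<Sum>w\<in>Cons True ` A1. (1/2::real) ^ length w)"
      unfolding AU by (rule sum.union_disjoint) (use f0 f1 in auto)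
    also have "\<dots> = (1/2) * (\<Sum>w\<in>A0. (1/2::real) ^ length w) + (1/2) * (\<Sum>w\<in>A1. (1/2::real) ^ length w)"
      by (simp add: sum.reindex sum_distrib_left)
    also have "\<dots> \<le> (1/2) * 1 + (1/2) * 1"
      using Suc.IH[OF f0 p0 l0] Suc.IH[OF f1 p1 l1] by linarith
    finally show ?thesis by simp
  qed
qed

lemma tree_label_append: "tree_label M C (u @ w) =
   (case tree_label M C u of None \<Rightarrow> None | Some C' \<Rightarrow> tree_label M C' w)"
  by (induction u arbitrary: C) auto

lemma b2n: "foldl (\<lambda>a c. 2 * a + (if c then 2 else 1)) 0 (nat_to_bin n) = n"
proof (induction n rule: nat_to_bin.induct)
  case (2 n)
  have "2 * (n div 2) + (if odd n then 2 else 1) = Suc n" by (cases "even n") (auto elim: evenE oddE)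
  thus ?case using 2 by simp
qed simp

lemma inj_nat_to_bin: "inj nat_to_bin"
  by (rule inj_on_inverseI[where g="foldl (\<lambda>a c. 2 * a + (if c then 2 else 1)) 0"]) (rule b2n)

context
  fixes M :: "('q::finite, 's::finite) ptm" and x :: nat
begin

definition Sx :: "nat \<Rightarrow> real" where
  "Sx y = (\<Sum>k\<in>{k. k < y \<and> is_leaf M x k}. (1/2) ^ L k)"

lemma Sx_le: "Sx y \<le> 1"
proof -
  let ?K = "{k. k < y \<and> is_leaf M x k}"
  have "Sx y = (\<Sum>w\<in>nat_to_bin ` ?K. (1/2) ^ length w)"
    unfolding Sx_def by (subst sum.reindex) (auto intro: inj_on_subset[OF inj_nat_to_bin])
  also have "\<dots> \<le> 1"
  proof (rule kraft)
    show "finite (nat_to_bin ` ?K)" by simp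
    show "\<forall>w\<in>nat_to_bin ` ?K. length w \<le> y"
    proof
      fix w assume "w \<in> nat_to_bin ` ?K"
      then obtain k where "w = nat_to_bin k" "k < y" by auto
      thus "length w \<le> y" using len_le[of k] by simp
    qed
    show "pfree (nat_to_bin ` ?K)" unfolding pfree_def
    proof (intro ballI allI impI)
      fix u v w assume "u \<in> nat_to_bin ` ?K" "v \<in> nat_to_bin ` ?K" and e: "v = u @ w"
      then obtain k1 k2 where k: "u = nat_to_bin k1" "v = nat_to_bin k2" "is_leaf M x k1" "is_leaf M x k2" by auto
      show "w = []"
      proof (rule ccontr)
        assume "w \<noteq> []"
        then obtain i w' where w: "w = i # w'" by (cases w) auto
        obtain C where C: "CT_label M x u = Some C" "is_final M C" using k(1,3) unfolding is_leaf_def by auto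
        have "CT_label M x v = None" using C unfolding e CT_label_def by (simp add: tree_label_append w)
        thus False using k(2,4) unfolding is_leaf_def by auto
      qed
    qed
  qed
  finally show ?thesis .
qed

lemma Sx_Suc: "Sx (Suc y) = Sx y + (if is_leaf M x y then (1/2) ^ L y else 0)"
proof -
  have "{k. k < Suc y \<and> is_leaf M x k} = (if is_leaf M x y then insert y {k. k < y \<and> is_leaf M x k} else {k. k < y \<and> is_leaf M x k})"
    by (auto simp: less_Suc_eq)
  thus ?thesis unfolding Sx_def by simp
qed

lemma PT_prod_Sx: "PT_prod M x y = 1 - Sx y"
proof (induction y)
  case 0 thus ?case by (simp add: Sx_def)
next
  case (Suc y)
  show ?case
  proof (cases "is_leaf M x y")
    case True
    have "Sx y + (1/2) ^ L y \<le> 1" using Sx_le[of "Suc y"] True by (simp add: Sx_Suc)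
    moreover have "(0::real) < (1/2) ^ L y" by simp
    ultimately have pos: "1 - Sx y > 0" by linarith
    show ?thesis using True pos by (simp add: Suc Sx_Suc PT_def field_simps)
  next
    case False thus ?thesis by (simp add: Suc Sx_Suc)
  qed
qed

lemma SB_real: "real (SB M x y) = 2 ^ L y * Sx y"
proof -
  have t: "real (if is_leaf M x k then 2 ^ (L y - L k) else 0) =
           (if is_leaf M x k then 2 ^ L y * (1/2) ^ L k else 0)" if "k < y" for k
  proof -
    have "L k \<le> L y" using len_mono that by simp
    hence "(2::real) ^ (L y - L k) = 2 ^ L y / 2 ^ L k" by (rule power_diff[rotated]) simp
    thus ?thesis by (simp add: power_one_over)
  qed
  have "real (SB M x y) = (\<Sum>k<y. real (if is_leaf M x k then 2 ^ (L y - L k) else 0))"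
    unfolding SB_def leafC_correct by (rule of_nat_sum)
  also have "\<dots> = (\<Sum>k<y. (if is_leaf M x k then 2 ^ L y * (1/2) ^ L k else 0))"
    by (rule sum.cong) (auto simp only: t lessThan_iff)
  also have "\<dots> = (\<Sum>k\<in>{k\<in>{..<y}. is_leaf M x k}. 2 ^ L y * (1/2) ^ L k)"
    by (rule sum.inter_filter[symmetric]) simp
  also have "{k\<in>{..<y}. is_leaf M x k} = {k. k < y \<and> is_leaf M x k}" by auto
  also have "(\<Sum>k\<in>{k. k < y \<and> is_leaf M x k}. 2 ^ L y * (1/2::real) ^ L k) = 2 ^ L y * Sx y"
    unfolding Sx_def by (rule sum_distrib_left[symmetric])
  finally show ?thesis .
qed

lemma PT0_Bv: "is_leaf M x y \<Longrightarrow> 1 \<le> Bv M x y \<and> PT0 M x y = 1 / real (Bv M x y)"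
proof -
  assume lf: "is_leaf M x y"
  have h: "Sx y + (1/2) ^ L y \<le> 1" using Sx_le[of "Suc y"] lf by (simp add: Sx_Suc)
  have "2 ^ L y * Sx y + 1 \<le> (2::real) ^ L y"
  proof -
    have "2 ^ L y * (Sx y + (1/2) ^ L y) \<le> (2::real) ^ L y * 1" using h by (intro mult_left_mono) auto
    thus ?thesis by (simp add: distrib_left power_one_over)
  qed
  hence le: "real (SB M x y) + 1 \<le> 2 ^ L y" by (simp add: SB_real)
  hence "real (SB M x y + 1) \<le> real (2 ^ L y)" by simp
  hence le': "SB M x y + 1 \<le> 2 ^ L y" by (simp only: of_nat_le_iff)
  have Bvr: "real (Bv M x y) = 2 ^ L y * (1 - Sx y)"
    using le' by (simp add: Bv_def of_nat_diff SB_real algebra_simps)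
  have "1 \<le> Bv M x y" using le' by (simp add: Bv_def)
  moreover have "PT0 M x y = 1 / real (Bv M x y)"
    using lf by (simp add: PT0_def PT_prod_Sx PT_def Bvr power_one_over)
  ultimately show ?thesis by simp
qed

end


lemma half_sums: "(\<lambda>n. (1/2::real) ^ Suc n) sums 1"
proof -
  have "(\<lambda>n. (1/2::real) ^ n) sums (1 / (1 - 1/2))" by (rule geometric_sums) simp
  from sums_mult[OF this, of "1/2"] show ?thesis by simp
qed

lemma infsum_of_sums: "f sums (s::real) \<Longrightarrow> (\<And>n. f n \<ge> 0) \<Longrightarrow> infsum f UNIV = s"
  by (rule infsumI, rule sums_nonneg_imp_has_sum)

lemma div_step: "(2::nat) ^ Suc n div b = 2 * (2 ^ n div b) + (2 ^ Suc n div b) mod 2"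
proof -
  have "2 ^ Suc n div b div 2 = (2 ^ n * 2) div (b * 2)" by (simp add: div_mult2_eq mult.commute)
  also have "\<dots> = 2 ^ n div b" by (rule div_mult_mult2) simp
  finally show ?thesis by (metis div_mult_mod_eq mult.commute)
qed

lemma bern_sums:
  assumes "2 \<le> b"
  shows "(\<lambda>Y. (1/2::real) ^ Suc Y * (if (2 ^ Suc Y div b) mod 2 = 1 then 1 else 0)) sums (1 / real b)"
proof -
  let ?f = "\<lambda>Y. (1/2::real) ^ Suc Y * (if (2 ^ Suc Y div b) mod 2 = 1 then 1 else 0)"
  have ps: "(\<Sum>Y<n. ?f Y) = real (2 ^ n div b) / 2 ^ n" for n
  proof (induction n)
    case 0 thus ?case using assms by simp
  next
    case (Suc n)
    have e: "real (2 ^ Suc n div b) = 2 * real (2 ^ n div b) + real ((2 ^ Suc n div b) mod 2)"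
      by (subst div_step) simp
    have m: "(2 ^ Suc n div b) mod 2 = 0 \<or> (2 ^ Suc n div b) mod 2 = 1" by auto
    have "(\<Sum>Y<Suc n. ?f Y) = real (2 ^ n div b) / 2 ^ n + ?f n"
      by (simp only: sum.lessThan_Suc Suc.IH)
    also have "\<dots> = real (2 ^ Suc n div b) / 2 ^ Suc n"
      unfolding e using m by (auto simp: field_simps power_one_over)
    finally show ?case .
  qed
  have lim: "(\<lambda>n. real (2 ^ n div b) / 2 ^ n) \<longlonglongrightarrow> 1 / real b"
  proof -
    have eq: "real (2 ^ n div b) / 2 ^ n = 1 / real b - real (2 ^ n mod b) / (real b * 2 ^ n)" for n
    proof -
      have "real (2 ^ n) = real b * real (2 ^ n div b) + real (2 ^ n mod b)"
        by (metis div_mult_mod_eq of_nat_add of_nat_mult mult.commute)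
      hence eqn: "(2::real) ^ n = real b * real (2 ^ n div b) + real (2 ^ n mod b)" by simp
      have key: "q / P = 1 / bb - r / (bb * P)" if h: "P = bb * q + r" "bb > 0" "P > 0" for P bb q r :: real
      proof -
        have "1 / bb - r / (bb * P) = (P - r) / (bb * P)" using h(2,3) by (simp add: field_simps)
        also have "P - r = bb * q" using h(1) by simp
        finally show ?thesis using h(2) by simp
      qed
      show ?thesis by (rule key[OF eqn]) (use assms in auto)
    qed
    have z: "(\<lambda>n. real (2 ^ n mod b) / (real b * 2 ^ n)) \<longlonglongrightarrow> 0"
    proof (rule tendsto_sandwich[of "\<lambda>_. 0" _ _ "\<lambda>n. (1/2) ^ n"])
      show "\<forall>\<^sub>F n in sequentially. 0 \<le> real (2 ^ n mod b) / (real b * 2 ^ n)" by simp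
      show "\<forall>\<^sub>F n in sequentially. real (2 ^ n mod b) / (real b * 2 ^ n) \<le> (1/2) ^ n"
      proof (rule always_eventually, rule allI)
        fix n
        have "real (2 ^ n mod b) \<le> real b" using assms by simp
        hence "real (2 ^ n mod b) / (real b * 2 ^ n) \<le> real b / (real b * 2 ^ n)"
          by (intro divide_right_mono) auto
        also have "\<dots> = (1/2) ^ n" using assms by (simp add: power_one_over)
        finally show "real (2 ^ n mod b) / (real b * 2 ^ n) \<le> (1/2) ^ n" .
      qed
      show "(\<lambda>_. 0::real) \<longlonglongrightarrow> 0" by simp
      show "(\<lambda>n. (1/2::real) ^ n) \<longlonglongrightarrow> 0" by (rule LIMSEQ_power_zero) simp
    qed
    show ?thesis unfolding eq using tendsto_diff[OF tendsto_const z, of "1 / real b"] by simp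
  qed
  show ?thesis unfolding sums_def ps using lim .
qed


definition coin :: pf where "coin xs w = (if w = 0 \<or> w = 1 then 1/2 else 0)"

lemma PRa_coin: "PRa 3 coin"
proof -
  have "PRa 3 (\<lambda>xs. pf_rand (map (\<lambda>g. g xs) [\<lambda>_. 0]))"
  proof (rule PRa_comp)
    show "PRa (length [\<lambda>_. 0]) pf_rand" using PRa_PR[OF PR_rand] by simp
  qed (auto intro: DPR_const)
  thus ?thesis by (rule PRa_cong) (auto simp: coin_def pf_rand_def fun_eq_iff)
qed

lemma mu_coin: "pf_mu coin xs y = (1/2) ^ Suc y"
proof -
  have "(\<Sum>\<^sub>\<infinity>k\<in>{0<..}. coin (xs @ [z]) k) = coin (xs @ [z]) 1" for z
    by (rule infsum_single_pt) (auto simp: coin_def)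
  hence s: "(\<Sum>\<^sub>\<infinity>k\<in>{0<..}. coin (xs @ [z]) k) = 1/2" for z by (simp add: coin_def)
  show ?thesis unfolding pf_mu_def s by (simp add: coin_def)
qed

lemma final_value:
  fixes M :: "('q::finite, 's::finite) ptm"
  shows "(\<Sum>\<^sub>\<infinity>z\<in>UNIV. (1/2::real) ^ Suc z * (if w = H M [x, y, 0, z] then 1 else 0)) = PTC M x y w"
proof (cases "is_leaf M x y")
  case False
  hence h: "H M [x, y, 0, z] = 1" for z by (simp add: H_def leafC_correct)
  show ?thesis
  proof (cases "w = 1")
    case True
    have "(\<lambda>z. (1/2::real) ^ Suc z * (if w = H M [x, y, 0, z] then 1 else 0)) = (\<lambda>z. (1/2::real) ^ Suc z)"
      using True h by (auto simp: fun_eq_iff)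
    moreover have "infsum (\<lambda>z. (1/2::real) ^ Suc z) UNIV = 1" by (rule infsum_of_sums[OF half_sums]) simp
    ultimately show ?thesis using True False by (simp add: PTC_def PT1_def)
  next
    case w: False
    thus ?thesis using h False by (simp add: PTC_def PT0_def)
  qed
next
  case True
  note pb = PT0_Bv[OF True]
  show ?thesis
  proof (cases "Bv M x y \<le> 1")
    case b1: True
    hence "Bv M x y = 1" using pb by simp
    hence h: "H M [x, y, 0, z] = 0" for z using True by (simp add: H_def leafC_correct)
    show ?thesis
    proof (cases "w = 0")
      case w: True
      have "(\<lambda>z. (1/2::real) ^ Suc z * (if w = H M [x, y, 0, z] then 1 else 0)) = (\<lambda>z. (1/2::real) ^ Suc z)"
        using w h by (auto simp: fun_eq_iff)
      moreover have "infsum (\<lambda>z. (1/2::real) ^ Suc z) UNIV = 1" by (rule infsum_of_sums[OF half_sums]) simp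
      ultimately show ?thesis using w pb \<open>Bv M x y = 1\<close> by (simp add: PTC_def)
    next
      case w: False
      thus ?thesis using h pb \<open>Bv M x y = 1\<close> True by (simp add: PTC_def PT1_def)
    qed
  next
    case b2: False
    let ?bit = "\<lambda>z. (2 ^ Suc z div Bv M x y) mod 2 = 1"
    have h: "H M [x, y, 0, z] = (if ?bit z then 0 else 1)" for z
      using True b2 by (simp add: H_def leafC_correct)
    have bs: "(\<lambda>z. (1/2::real) ^ Suc z * (if ?bit z then 1 else 0)) sums (1 / real (Bv M x y))"
      using b2 by (intro bern_sums) simp
    show ?thesis
    proof (cases "w = 0")
      case w: True
      have "(\<lambda>z. (1/2::real) ^ Suc z * (if w = H M [x, y, 0, z] then 1 else 0)) =
            (\<lambda>z. (1/2::real) ^ Suc z * (if ?bit z then 1 else 0))" (is "_ = ?g") using w by (auto simp: h fun_eq_iff)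
      moreover have "infsum ?g UNIV = 1 / real (Bv M x y)" by (rule infsum_of_sums[OF bs]) simp
      ultimately show ?thesis using w pb by (simp add: PTC_def)
    next
      case w: False
      show ?thesis
      proof (cases "w = 1")
        case w1: True
        have "(\<lambda>z. (1/2::real) ^ Suc z * (if w = H M [x, y, 0, z] then 1 else 0)) =
              (\<lambda>z. (1/2::real) ^ Suc z - (1/2::real) ^ Suc z * (if ?bit z then 1 else 0))"
          using w1 by (auto simp: h fun_eq_iff)
        moreover have "(\<lambda>z. (1/2::real) ^ Suc z - (1/2::real) ^ Suc z * (if ?bit z then 1 else 0))
           sums (1 - 1 / real (Bv M x y))" by (rule sums_diff[OF half_sums bs])
        ultimately show ?thesis using w1 pb True
          by (subst infsum_of_sums) (auto simp: PTC_def PT1_def)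
      next
        case w1: False
        have "(\<lambda>z. (1/2::real) ^ Suc z * (if w = H M [x, y, 0, z] then 1 else 0)) = (\<lambda>_. 0)"
          using w w1 h by (auto simp: fun_eq_iff)
        thus ?thesis using w w1 by (simp add: PTC_def)
      qed
    qed
  qed
qed

theorem mainTheorem10:
  fixes M :: "('q::finite, 's::finite) ptm"
  assumes "wf_ptm M"
  shows "\<exists>f. PR 2 f \<and> (\<forall>x y. f [x, y] = PTC M x y)"
proof -
  have G: "PRa 2 (pf_mu coin)" using PRa_mu[of 2 coin] PRa_coin by simp
  have Hd: "PRa (2+2) (dpf (H M))" using DPR_H[of M] unfolding DPR_def by simp
  have P3: "PRa (2+1) (\<lambda>ys. pf_primrec_aux (pf_mu coin) (dpf (H M)) (butlast ys) (last ys))"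
    by (rule PRa_primrec[OF G Hd])
  have "PRa 2 (\<lambda>xs. (\<lambda>ys. pf_primrec_aux (pf_mu coin) (dpf (H M)) (butlast ys) (last ys))
                    (map (\<lambda>g. g xs) [\<lambda>xs. xs!0, \<lambda>xs. xs!1, \<lambda>_. 1]))"
  proof (rule PRa_comp)
    have l: "length [\<lambda>xs::nat list. xs!0, \<lambda>xs. xs!1, \<lambda>_. 1::nat] = 2+1" by simp
    show "PRa (length [\<lambda>xs::nat list. xs!0, \<lambda>xs. xs!1, \<lambda>_. 1::nat])
      (\<lambda>ys. pf_primrec_aux (pf_mu coin) (dpf (H M)) (butlast ys) (last ys))"
      unfolding l by (rule P3)
  qed (auto intro: DPR_proj DPR_const)
  hence "PRa 2 (\<lambda>xs. PTC M (xs!0) (xs!1))"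
  proof (rule PRa_cong)
    fix xs :: "nat list" assume "length xs = 2"
    then obtain x y where xs: "xs = [x, y]" by (metis (no_types, lifting) One_nat_def diff_Suc_1 length_0_conv
          length_Cons length_tl list.exhaust_sel numeral_2_eq_2 zero_neq_numeral)
    show "(\<lambda>ys. pf_primrec_aux (pf_mu coin) (dpf (H M)) (butlast ys) (last ys))
                    (map (\<lambda>g. g xs) [\<lambda>xs. xs!0, \<lambda>xs. xs!1, \<lambda>_. 1]) = PTC M (xs!0) (xs!1)"
    proof
      fix w
      show "(\<lambda>ys. pf_primrec_aux (pf_mu coin) (dpf (H M)) (butlast ys) (last ys))
                    (map (\<lambda>g. g xs) [\<lambda>xs. xs!0, \<lambda>xs. xs!1, \<lambda>_. 1]) w = PTC M (xs!0) (xs!1) w"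
        using final_value[of w M x y] by (simp add: xs mu_coin dpf_def)
    qed
  qed
  then obtain f where "PR 2 f" "\<And>xs. length xs = 2 \<Longrightarrow> f xs = PTC M (xs!0) (xs!1)"
    unfolding PRa_def by blast
  thus ?thesis by (intro exI[of _ f]) auto
qed


end
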